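(* Let $m,n\in\mathbb N$, $p\in(0,1)$, $\pi\in(0,1/2)$, and let $R\in\mathbb F_2^{m\times n}$ be a random matrix with mutually independent columns, each column being zero with probability $1-p$ and otherwise consisting of i.i.d. $\mathrm{Bern}(\pi)$ entries. For $1\le k\le n$ let $x_k\in\mathbb F_2^n$ have exactly $k$ ones. Then $$\mathbb P(Rx_k=0)\le 2^{-m}\Bigl[1+\exp(-kp\pi)+2\exp\Bigl(-\tfrac kmD\bigl(\tfrac p2;p\bigr)\Bigr)\Bigr]^m.$$ In addition, $$\mathbb P(Rx_k=0)\le e^{-kmp\pi/4}\quad\text{for all } 1\le k\le k^*,$$ where $k^*=\max\bigl\{k:\ (1-2\pi)^k\ge\tfrac12\text{ and }\bigl(1-\tfrac{\pi k}{2}\bigr)^m\ge\tfrac12\bigr\}$.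
   Context: $D(q;p)=q\log\frac qp+(1-q)\log\frac{1-q}{1-p}$ is the Kullback–Leibler divergence of $\mathrm{Bern}(q)$ from $\mathrm{Bern}(p)$. Arithmetic in $Rx_k$ is over $\mathbb F_2$. *)

theory Defs
  imports "HOL-Probability.Probability"
begin

definition KL :: "real \<Rightarrow> real \<Rightarrow> real" where
  "KL q p = q * ln (q / p) + (1 - q) * ln ((1 - q) / (1 - p))"

definition col_pmf :: "nat \<Rightarrow> real \<Rightarrow> real \<Rightarrow> (nat \<Rightarrow> bool) pmf" where
  "col_pmf m p ppi =
     bind_pmf (bernoulli_pmf p)
       (\<lambda>b. if b then Pi_pmf {..<m} False (\<lambda>_. bernoulli_pmf ppi)
            else return_pmf (\<lambda>_. False))"

text \<open>Random matrix R in F_2^{m x n}: R j i is the entry in row i, column j;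
  the n columns are mutually independent with distribution col_pmf.\<close>
definition mat_pmf :: "nat \<Rightarrow> nat \<Rightarrow> real \<Rightarrow> real \<Rightarrow> (nat \<Rightarrow> nat \<Rightarrow> bool) pmf" where
  "mat_pmf m n p ppi = Pi_pmf {..<n} (\<lambda>_. False) (\<lambda>_. col_pmf m p ppi)"

definition mat_vec_zero :: "nat \<Rightarrow> nat \<Rightarrow> (nat \<Rightarrow> nat \<Rightarrow> bool) \<Rightarrow> (nat \<Rightarrow> bool) \<Rightarrow> bool" where
  "mat_vec_zero m n R x \<longleftrightarrow> (\<forall>i<m. even (card {j. j < n \<and> R j i \<and> x j}))"

definition kstar :: "nat \<Rightarrow> real \<Rightarrow> nat" where
  "kstar m ppi = Max {k::nat. (1 - 2 * ppi) ^ k \<ge> 1/2 \<and> (1 - ppi * real k / 2) ^ m \<ge> 1/2}"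

end

theory Submission imports Defs begin

lemma integral_bind_pmf_bdd:
  fixes f :: "'b \<Rightarrow> real"
  assumes "\<And>x. \<bar>f x\<bar> \<le> B"
  shows "measure_pmf.expectation (bind_pmf M N) f =
         measure_pmf.expectation M (\<lambda>x. measure_pmf.expectation (N x) f)"
  unfolding measure_pmf_bind
  using measurable_measure_pmf[of N]
  by (intro integral_bind[where K="count_space UNIV" and B=B and B'=1])
     (auto simp: assms measure_pmf.emeasure_space_1)

lemma expectation_prod_Pi_pmf_bdd:
  fixes f :: "'a \<Rightarrow> 'b \<Rightarrow> real"
  assumes A: "finite A" and J: "J \<subseteq> A" and bnd: "\<And>j y. \<bar>f j y\<bar> \<le> 1"
  shows "measure_pmf.expectation (Pi_pmf A d P) (\<lambda>y. \<Prod>j\<in>J. f j (y j)) =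
         (\<Prod>j\<in>J. measure_pmf.expectation (P j) (f j))"
proof -
  have fJ: "finite J" using A J finite_subset by blast
  have "prob_space.indep_vars (measure_pmf (Pi_pmf A d P)) (\<lambda>_. count_space UNIV) (\<lambda>x f. f x) J"
    using prob_space.indep_vars_subset[OF measure_pmf.prob_space_axioms indep_vars_Pi_pmf[OF A] J] .
  then have ind: "prob_space.indep_vars (measure_pmf (Pi_pmf A d P)) (\<lambda>_. borel) (\<lambda>j y. f j (y j)) J"
    by (rule prob_space.indep_vars_compose2[OF measure_pmf.prob_space_axioms]) auto
  have int: "integrable (measure_pmf (Pi_pmf A d P)) (\<lambda>y. f j (y j))" for j
    by (intro measure_pmf.integrable_const_bound[where B=1]) (auto simp: bnd)
  have "measure_pmf.expectation (Pi_pmf A d P) (\<lambda>y. \<Prod>j\<in>J. f j (y j)) =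
        (\<Prod>j\<in>J. measure_pmf.expectation (Pi_pmf A d P) (\<lambda>y. f j (y j)))"
    by (rule prob_space.indep_vars_lebesgue_integral[OF measure_pmf.prob_space_axioms fJ ind int])
  also have "\<dots> = (\<Prod>j\<in>J. measure_pmf.expectation (P j) (f j))"
  proof (rule prod.cong[OF refl])
    fix j assume "j \<in> J"
    then have "j \<in> A" using J by auto
    have "measure_pmf.expectation (Pi_pmf A d P) (\<lambda>y. f j (y j)) =
          measure_pmf.expectation (map_pmf (\<lambda>y. y j) (Pi_pmf A d P)) (f j)"
      by simp
    also have "\<dots> = measure_pmf.expectation (P j) (f j)"
      using Pi_pmf_component[OF A, of j d P] \<open>j \<in> A\<close> by simp
    finally show "measure_pmf.expectation (Pi_pmf A d P) (\<lambda>y. f j (y j)) =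
          measure_pmf.expectation (P j) (f j)" .
  qed
  finally show ?thesis .
qed

definition sg :: "bool \<Rightarrow> real" where "sg b = (if b then -1 else 1)"

lemma col_exp:
  assumes "U \<subseteq> {..<m}" "0 \<le> p" "p \<le> 1" "0 \<le> ppi" "ppi \<le> 1"
  shows "measure_pmf.expectation (col_pmf m p ppi) (\<lambda>r. \<Prod>i\<in>U. sg (r i)) =
         1 - p + p * (1 - 2 * ppi) ^ card U"
proof -
  have bnd: "\<bar>\<Prod>i\<in>U. sg (r i)\<bar> \<le> 1" for r
    by (simp add: abs_prod sg_def prod_le_1)
  have E: "measure_pmf.expectation (Pi_pmf {..<m} False (\<lambda>_. bernoulli_pmf ppi)) (\<lambda>r. \<Prod>i\<in>U. sg (r i))
     = (1 - 2 * ppi) ^ card U"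
    using expectation_prod_Pi_pmf_bdd[of "{..<m}" U "\<lambda>_. sg" False "\<lambda>_. bernoulli_pmf ppi"] assms
    by (simp add: sg_def)
  show ?thesis
    unfolding col_pmf_def
    apply (subst integral_bind_pmf_bdd[where B=1])
     apply (rule bnd)
    using assms E by (simp add: sg_def algebra_simps)
qed

lemma prod_sg: "finite S \<Longrightarrow> (\<Prod>j\<in>S. sg (P j)) = (-1) ^ card {j\<in>S. P j}"
proof -
  assume f: "finite S"
  have "(\<Prod>j\<in>S. sg (P j)) = (\<Prod>j\<in>S \<inter> {j. P j}. -1) * (\<Prod>j\<in>S \<inter> - {j. P j}. 1)"
    unfolding sg_def using prod.If_cases[OF f, of P "\<lambda>_. -1::real" "\<lambda>_. 1"] by simp
  also have "\<dots> = (-1) ^ card {j\<in>S. P j}"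
    by (simp add: Int_def conj_commute)
  finally show ?thesis .
qed

lemma prod_of_bool_lessThan: "(\<Prod>i<(m::nat). (if Q i then 1 else 0 :: real)) = (if \<forall>i<m. Q i then 1 else 0)"
  by (induction m) (auto simp: less_Suc_eq)

lemma bdd_prod_sg: "\<bar>\<Prod>i\<in>U. sg (r i)\<bar> \<le> 1"
  by (simp add: abs_prod sg_def prod_le_1)

lemma prob_formula:
  assumes "0 \<le> p" "p \<le> 1" "0 \<le> ppi" "ppi \<le> 1" "card {j. j < n \<and> x j} = k"
  shows "measure_pmf.prob (mat_pmf m n p ppi) {R. mat_vec_zero m n R x} =
         (1/2)^m * (\<Sum>U\<in>Pow {..<m}. (1 - p + p * (1 - 2 * ppi) ^ card U) ^ k)"
proof -
  define S where "S = {j. j < n \<and> x j}"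
  have fS: "finite S" "S \<subseteq> {..<n}" unfolding S_def by auto
  define M where "M = mat_pmf m n p ppi"
  have ind: "indicator {R. mat_vec_zero m n R x} R =
     (1/2)^m * (\<Sum>U\<in>Pow {..<m}. \<Prod>i\<in>U. \<Prod>j\<in>S. sg (R j i))" for R
  proof -
    have e: "{j. j < n \<and> R j i \<and> x j} = {j\<in>S. R j i}" for i unfolding S_def by auto
    have "indicator {R. mat_vec_zero m n R x} R =
          (\<Prod>i<m. (if even (card {j\<in>S. R j i}) then 1 else 0 :: real))"
      by (simp add: prod_of_bool_lessThan mat_vec_zero_def e indicator_def)
    also have "\<dots> = (\<Prod>i<m. (1/2) * ((\<Prod>j\<in>S. sg (R j i)) + 1))"
      by (intro prod.cong refl) (simp add: prod_sg[OF fS(1)])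
    also have "\<dots> = (1/2)^m * (\<Prod>i<m. ((\<Prod>j\<in>S. sg (R j i)) + 1))"
      by (simp only: prod.distrib prod_constant card_lessThan)
    also have "(\<Prod>i<m. ((\<Prod>j\<in>S. sg (R j i)) + 1)) = (\<Sum>U\<in>Pow {..<m}. \<Prod>i\<in>U. \<Prod>j\<in>S. sg (R j i))"
      by (subst prod_add) simp_all
    finally show ?thesis .
  qed
  have int: "integrable (measure_pmf M) (\<lambda>R. \<Prod>i\<in>U. \<Prod>j\<in>S. sg (R j i))" for U
    by (intro measure_pmf.integrable_const_bound[where B=1])
       (auto intro!: AE_pmfI prod_le_1 prod_nonneg simp: abs_prod sg_def)
  have "measure_pmf.prob M {R. mat_vec_zero m n R x} =
        measure_pmf.expectation M (indicator {R. mat_vec_zero m n R x})"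
    by simp
  also have "\<dots> = measure_pmf.expectation M (\<lambda>R. (1/2)^m * (\<Sum>U\<in>Pow {..<m}. \<Prod>i\<in>U. \<Prod>j\<in>S. sg (R j i)))"
    by (intro Bochner_Integration.integral_cong refl) (rule ind)
  also have "\<dots> = (1/2)^m * (\<Sum>U\<in>Pow {..<m}. measure_pmf.expectation M (\<lambda>R. \<Prod>i\<in>U. \<Prod>j\<in>S. sg (R j i)))"
    by (simp add: int)
  also have "\<dots> = (1/2)^m * (\<Sum>U\<in>Pow {..<m}. (1 - p + p * (1 - 2 * ppi) ^ card U) ^ k)"
  proof (intro arg_cong2[where f="(*)"] refl sum.cong)
    fix U assume U: "U \<in> Pow {..<m}"
    have "measure_pmf.expectation M (\<lambda>R. \<Prod>i\<in>U. \<Prod>j\<in>S. sg (R j i)) =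
          measure_pmf.expectation M (\<lambda>R. \<Prod>j\<in>S. \<Prod>i\<in>U. sg (R j i))"
      by (simp add: prod.swap[of _ U])
    also have "\<dots> = (\<Prod>j\<in>S. measure_pmf.expectation (col_pmf m p ppi) (\<lambda>r. \<Prod>i\<in>U. sg (r i)))"
      unfolding M_def mat_pmf_def
      by (rule expectation_prod_Pi_pmf_bdd[OF _ fS(2)]) (auto simp: bdd_prod_sg)
    also have "\<dots> = (1 - p + p * (1 - 2 * ppi) ^ card U) ^ k"
      using col_exp[of U m p ppi] U assms by (simp add: S_def)
    finally show "measure_pmf.expectation M (\<lambda>R. \<Prod>i\<in>U. \<Prod>j\<in>S. sg (R j i)) =
          (1 - p + p * (1 - 2 * ppi) ^ card U) ^ k" .
  qed
  finally show ?thesis unfolding M_def .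
qed

lemma sum_pow_card: "finite A \<Longrightarrow> (\<Sum>U\<in>Pow A. (y::real) ^ card U) = (1 + y) ^ card A"
proof -
  assume f: "finite A"
  have "(\<Prod>i\<in>A. y + 1) = (\<Sum>U\<in>Pow A. (\<Prod>i\<in>U. y) * (\<Prod>i\<in>A - U. 1))"
    by (rule prod_add[OF f])
  then show ?thesis by (simp add: add.commute)
qed

lemma binom_formula:
  fixes p c :: real
  shows "(1/2)^m * (\<Sum>U\<in>Pow {..<m}. (1 - p + p * c ^ card U) ^ k) =
    (\<Sum>a\<le>k. real (k choose a) * p ^ a * (1 - p) ^ (k - a) * ((1 + c ^ a) / 2) ^ m)"
proof -
  have "(\<Sum>U\<in>Pow {..<m}. (1 - p + p * c ^ card U) ^ k) =
        (\<Sum>U\<in>Pow {..<m}. \<Sum>a\<le>k. real (k choose a) * p ^ a * (1 - p) ^ (k - a) * (c ^ a) ^ card U)"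
  proof (rule sum.cong[OF refl])
    fix U :: "nat set"
    have "(1 - p + p * c ^ card U) ^ k = (p * c ^ card U + (1 - p)) ^ k" by (simp add: algebra_simps)
    also have "\<dots> = (\<Sum>a\<le>k. real (k choose a) * (p * c ^ card U) ^ a * (1 - p) ^ (k - a))"
      by (rule binomial_ring)
    also have "\<dots> = (\<Sum>a\<le>k. real (k choose a) * p ^ a * (1 - p) ^ (k - a) * (c ^ a) ^ card U)"
      by (intro sum.cong refl) (simp add: power_mult_distrib power_mult[symmetric] mult.commute mult.left_commute)
    finally show "(1 - p + p * c ^ card U) ^ k = (\<Sum>a\<le>k. real (k choose a) * p ^ a * (1 - p) ^ (k - a) * (c ^ a) ^ card U)" .
  qed
  also have "\<dots> = (\<Sum>a\<le>k. real (k choose a) * p ^ a * (1 - p) ^ (k - a) * (\<Sum>U\<in>Pow {..<m}. (c ^ a) ^ card U))"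
    by (subst sum.swap) (simp add: sum_distrib_left)
  also have "\<dots> = (\<Sum>a\<le>k. real (k choose a) * p ^ a * (1 - p) ^ (k - a) * (1 + c ^ a) ^ m)"
    by (simp add: sum_pow_card)
  finally show ?thesis
    by (simp add: sum_distrib_left power_divide field_simps)
qed

lemma pow_bern_bound:
  fixes ppi :: real
  assumes "0 < ppi" "ppi < 1/2"
  shows "(1 - 2 * ppi) ^ a * (1 + 2 * ppi * real a) \<le> 1"
proof -
  have c0: "0 \<le> (1 - 2 * ppi) ^ a" using assms by simp
  have "1 + 2 * ppi * real a \<le> (1 + 2 * ppi) ^ a"
    using Bernoulli_inequality[of "2 * ppi" a] assms by (simp add: mult.commute mult.left_commute)
  then have "(1 - 2 * ppi) ^ a * (1 + 2 * ppi * real a) \<le> (1 - 2 * ppi) ^ a * (1 + 2 * ppi) ^ a"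
    by (rule mult_left_mono[OF _ c0])
  also have "\<dots> = (1 - 4 * ppi^2) ^ a" by (simp add: power_mult_distrib[symmetric] algebra_simps power2_eq_square)
  also have "\<dots> \<le> 1"
  proof -
    have "ppi * ppi \<le> (1/2) * (1/2)" using assms by (intro mult_mono) auto
    then show ?thesis using assms by (intro power_le_one) (auto simp: power2_eq_square)
  qed
  finally show ?thesis .
qed

lemma row_bound:
  fixes ppi :: real
  assumes "0 < ppi" "ppi < 1/2" "(1 - 2 * ppi) ^ a \<ge> 1/2"
  shows "(1 + (1 - 2 * ppi) ^ a) / 2 \<le> exp (- ppi * real a / 2)"
proof -
  define y where "y = (1 - 2 * ppi) ^ a"
  define u where "u = 2 * ppi * real a"
  have h: "y * (1 + u) \<le> 1" using pow_bern_bound[OF assms(1,2)] unfolding y_def u_def by simp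
  have y: "y \<ge> 1/2" using assms(3) unfolding y_def .
  have u0: "u \<ge> 0" unfolding u_def using assms by simp
  have "(1/2) * u \<le> y * u" using y u0 by (intro mult_right_mono) auto
  then have "1 - y \<ge> u / 2" using h by (simp add: algebra_simps)
  then have "(1 + y) / 2 \<le> 1 + (- u / 4)" by (simp add: field_simps)
  also have "\<dots> \<le> exp (- u / 4)" by (rule exp_ge_add_one_self)
  also have "- u / 4 = - ppi * real a / 2" unfolding u_def by simp
  finally show ?thesis unfolding y_def .
qed

lemma binom_sum_geom:
  fixes p q :: real
  shows "(\<Sum>a\<le>k. real (k choose a) * p ^ a * (1 - p) ^ (k - a) * q ^ a) = (p * q + (1 - p)) ^ k"
  by (subst binomial_ring) (simp add: power_mult_distrib mult_ac)

lemma bound2: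
  fixes p ppi :: real
  assumes p: "0 < p" "p < 1" and pi: "0 < ppi" "ppi < 1/2"
    and ck: "(1 - 2 * ppi) ^ k \<ge> 1/2" and cm: "(1 - ppi / 2) ^ m \<ge> 1/2"
  shows "(\<Sum>a\<le>k. real (k choose a) * p ^ a * (1 - p) ^ (k - a) * ((1 + (1 - 2*ppi) ^ a) / 2) ^ m)
         \<le> exp (- real k * real m * p * ppi / 4)"
proof -
  define t where "t = ppi * real m / 2"
  define q where "q = exp (- t)"
  have "(\<Sum>a\<le>k. real (k choose a) * p ^ a * (1 - p) ^ (k - a) * ((1 + (1 - 2*ppi) ^ a) / 2) ^ m)
        \<le> (\<Sum>a\<le>k. real (k choose a) * p ^ a * (1 - p) ^ (k - a) * q ^ a)"
  proof (rule sum_mono)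
    fix a assume "a \<in> {..k}"
    then have "a \<le> k" by simp
    have "(1 - 2 * ppi) ^ k \<le> (1 - 2 * ppi) ^ a"
      using pi \<open>a \<le> k\<close> by (intro power_decreasing) auto
    then have "(1 - 2 * ppi) ^ a \<ge> 1/2" using ck by linarith
    then have "(1 + (1 - 2*ppi) ^ a) / 2 \<le> exp (- ppi * real a / 2)"
      using pi by (intro row_bound) auto
    then have "((1 + (1 - 2*ppi) ^ a) / 2) ^ m \<le> exp (- ppi * real a / 2) ^ m"
      using pi by (intro power_mono) auto
    also have "\<dots> = q ^ a" unfolding q_def t_def
      by (simp add: exp_of_nat_mult[symmetric] mult_ac)
    finally have "((1 + (1 - 2*ppi) ^ a) / 2) ^ m \<le> q ^ a" .
    then show "real (k choose a) * p ^ a * (1 - p) ^ (k - a) * ((1 + (1 - 2*ppi) ^ a) / 2) ^ m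
        \<le> real (k choose a) * p ^ a * (1 - p) ^ (k - a) * q ^ a"
      using p by (intro mult_left_mono) auto
  qed
  also have "\<dots> = (p * q + (1 - p)) ^ k" by (rule binom_sum_geom)
  also have "\<dots> \<le> exp (- p * t / 2) ^ k"
  proof (rule power_mono)
    have t0: "t \<ge> 0" unfolding t_def using pi by simp
    have "1 - ppi / 2 \<le> exp (- ppi / 2)" using exp_ge_add_one_self[of "- ppi / 2"] by simp
    then have "(1 - ppi / 2) ^ m \<le> exp (- ppi / 2) ^ m" using pi by (intro power_mono) auto
    also have "\<dots> = q" unfolding q_def t_def by (simp add: exp_of_nat_mult[symmetric] mult_ac)
    finally have q2: "q \<ge> 1/2" using cm by simp
    have "q * exp t = 1" unfolding q_def by (simp add: exp_minus)
    moreover have "1 + t \<le> exp t" by (rule exp_ge_add_one_self)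
    moreover have "q \<ge> 0" unfolding q_def by simp
    ultimately have qt: "q * (1 + t) \<le> 1" by (metis mult_left_mono)
    have "(1/2) * t \<le> q * t" using q2 t0 by (intro mult_right_mono) auto
    then have "t \<le> 1" using qt q2 by (simp add: algebra_simps)
    have "q * t \<ge> t / 2" using \<open>(1/2) * t \<le> q * t\<close> by simp
    have "q \<le> 1 - t / 2"
    proof -
      have "(1 - t/2) * (1 + t) \<ge> 1" using \<open>t \<le> 1\<close> t0
        by (simp add: algebra_simps) (metis mult_left_mono mult_1_right t0 \<open>t \<le> 1\<close> add_le_imp_le_left
            le_add_same_cancel1 mult.commute linorder_not_le order.trans field_sum_of_halves)
      then have "q * (1 + t) \<le> (1 - t/2) * (1 + t)" using qt by linarith
      then show ?thesis by (rule mult_right_le_imp_le) (use t0 in auto)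
    qed
    then have "p * q \<le> p * (1 - t / 2)" using p by (intro mult_left_mono) auto
    then have "p * q + (1 - p) \<le> 1 + (- p * t / 2)" by (simp add: algebra_simps)
    also have "\<dots> \<le> exp (- p * t / 2)" by (rule exp_ge_add_one_self)
    finally show "p * q + (1 - p) \<le> exp (- p * t / 2)" .
    show "0 \<le> p * q + (1 - p)" using p unfolding q_def by simp
  qed
  also have "\<dots> = exp (- real k * real m * p * ppi / 4)"
    unfolding t_def by (simp add: exp_of_nat_mult[symmetric] mult_ac)
  finally show ?thesis .
qed

lemma KL_half:
  assumes "0 < p" "p < 1"
  shows "KL (p/2) p = - (p/2) * ln 2 + (1 - p/2) * (ln (2 - p) - ln 2 - ln (1 - p))"
proof -
  have a: "(p/2)/p = 1/2" using assms by simp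
  have b: "(1 - p/2) / (1 - p) = (2 - p) / (2 * (1 - p))" using assms by (simp add: field_simps)
  have c1: "ln (2 * (1 - p)) = ln 2 + ln (1 - p)" using assms by (subst ln_mult) auto
  have c: "ln ((2 - p) / (2 * (1 - p))) = ln (2 - p) - ln 2 - ln (1 - p)"
  proof -
    have c2: "ln (2 - 2 * p) = ln 2 + ln (1 - p)" using c1 by (simp add: algebra_simps)
    show ?thesis using assms by (subst ln_div) (auto simp: c2)
  qed
  show ?thesis unfolding KL_def a b c by (simp add: ln_div)
qed

lemma chernoff:
  fixes p :: real
  assumes p: "0 < p" "p < 1"
  shows "(\<Sum>a\<le>k. real (k choose a) * p ^ a * (1 - p) ^ (k - a) *
           (if 2 * real a < real k * p then 1 else 0)) \<le> exp (- real k * KL (p/2) p)"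
proof -
  define l where "l = ln (2 - p) - ln (1 - p)"
  define r where "r = exp (- l)"
  have l0: "l > 0" unfolding l_def using p by simp
  have r: "r = (1 - p) / (2 - p)" unfolding r_def l_def using p by (simp add: exp_diff)
  have "(\<Sum>a\<le>k. real (k choose a) * p ^ a * (1 - p) ^ (k - a) *
           (if 2 * real a < real k * p then 1 else 0))
     \<le> (\<Sum>a\<le>k. real (k choose a) * p ^ a * (1 - p) ^ (k - a) * (exp (l * real k * p / 2) * r ^ a))"
  proof (rule sum_mono)
    fix a assume "a \<in> {..k}"
    have "(if 2 * real a < real k * p then 1 else 0) \<le> exp (l * real k * p / 2) * r ^ a"
    proof (cases "2 * real a < real k * p")
      case True
      have "exp (l * real k * p / 2) * r ^ a = exp (l * (real k * p / 2 - real a))"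
        unfolding r_def by (simp add: exp_of_nat_mult[symmetric] exp_add[symmetric] algebra_simps)
      also have "\<dots> \<ge> 1" using True l0 by simp
      finally show ?thesis using True by simp
    qed (simp add: r_def)
    then show "real (k choose a) * p ^ a * (1 - p) ^ (k - a) * (if 2 * real a < real k * p then 1 else 0)
     \<le> real (k choose a) * p ^ a * (1 - p) ^ (k - a) * (exp (l * real k * p / 2) * r ^ a)"
      using p by (intro mult_left_mono) auto
  qed
  also have "\<dots> = exp (l * real k * p / 2) * (p * r + (1 - p)) ^ k"
    by (subst binom_sum_geom[symmetric]) (simp add: sum_distrib_left mult_ac)
  also have "\<dots> = (exp (l * p / 2) * (p * r + (1 - p))) ^ k"
    by (simp add: power_mult_distrib exp_of_nat_mult[symmetric] mult_ac)
  also have "exp (l * p / 2) * (p * r + (1 - p)) = exp (- KL (p/2) p)"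
  proof -
    have "p * r + (1 - p) = 2 * (1 - p) / (2 - p)" unfolding r using p by (simp add: field_simps)
    also have "\<dots> = exp (ln 2 + ln (1 - p) - ln (2 - p))"
      using p by (simp add: exp_diff exp_add)
    finally have "exp (l * p / 2) * (p * r + (1 - p)) = exp (l * p / 2 + (ln 2 + ln (1 - p) - ln (2 - p)))"
      by (simp add: exp_add)
    also have "l * p / 2 + (ln 2 + ln (1 - p) - ln (2 - p)) = - KL (p/2) p"
      unfolding KL_half[OF p] l_def by (simp add: field_simps)
    finally show ?thesis .
  qed
  also have "exp (- KL (p/2) p) ^ k = exp (- real k * KL (p/2) p)"
    by (simp add: exp_of_nat_mult[symmetric])
  finally show ?thesis .
qed

lemma superadd:
  fixes x y :: real
  assumes "0 \<le> x" "0 \<le> y"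
  shows "x ^ Suc m + y ^ Suc m \<le> (x + y) ^ Suc m"
proof (induction m)
  case 0 then show ?case by simp
next
  case (Suc m)
  have "x ^ Suc (Suc m) + y ^ Suc (Suc m) \<le> (x + y) * (x ^ Suc m + y ^ Suc m)"
    using assms by (simp add: algebra_simps)
  also have "\<dots> \<le> (x + y) * (x + y) ^ Suc m"
    using Suc assms by (intro mult_left_mono) auto
  finally show ?case by simp
qed

lemma bound1:
  fixes p ppi :: real
  assumes p: "0 < p" "p < 1" and pi: "0 < ppi" "ppi < 1/2" and m: "m \<ge> 1"
  shows "(\<Sum>a\<le>k. real (k choose a) * p ^ a * (1 - p) ^ (k - a) * ((1 + (1 - 2*ppi) ^ a) / 2) ^ m)
         \<le> 2 powr (- real m) *
             (1 + exp (- real k * p * ppi) + 2 * exp (- (real k / real m) * KL (p / 2) p)) ^ m"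
proof -
  define E where "E = exp (- real k * p * ppi)"
  define w where "w a = real (k choose a) * p ^ a * (1 - p) ^ (k - a)" for a
  have w0: "w a \<ge> 0" for a unfolding w_def using p by simp
  have "(\<Sum>a\<le>k. w a * ((1 + (1 - 2*ppi) ^ a) / 2) ^ m)
        \<le> (\<Sum>a\<le>k. w a * ((1 + E) / 2) ^ m + w a * (if 2 * real a < real k * p then 1 else 0))"
  proof (rule sum_mono)
    fix a assume "a \<in> {..k}"
    have c0: "0 \<le> (1 - 2*ppi) ^ a" "(1 - 2*ppi) ^ a \<le> 1" using pi by (auto intro: power_le_one)
    have E0: "E \<ge> 0" unfolding E_def by simp
    show "w a * ((1 + (1 - 2*ppi) ^ a) / 2) ^ m
        \<le> w a * ((1 + E) / 2) ^ m + w a * (if 2 * real a < real k * p then 1 else 0)"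
    proof (cases "2 * real a < real k * p")
      case True
      have "((1 + (1 - 2*ppi) ^ a) / 2) ^ m \<le> 1" using c0 by (intro power_le_one) auto
      then have "w a * ((1 + (1 - 2*ppi) ^ a) / 2) ^ m \<le> w a" using w0 by (simp add: mult_left_le)
      moreover have "0 \<le> w a * ((1 + E) / 2) ^ m" using w0 E0 by simp
      ultimately show ?thesis using True by simp
    next
      case False
      have "1 - 2 * ppi \<le> exp (- 2 * ppi)" using exp_ge_add_one_self[of "-2*ppi"] by simp
      then have "(1 - 2*ppi) ^ a \<le> exp (- 2 * ppi) ^ a" using pi by (intro power_mono) auto
      also have "\<dots> = exp (- 2 * ppi * real a)" by (simp add: exp_of_nat_mult[symmetric] mult_ac)
      also have "\<dots> \<le> E" unfolding E_def using False pi
        by (simp add: mult_left_mono mult.commute mult.left_commute)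
      finally have "((1 + (1 - 2*ppi) ^ a) / 2) ^ m \<le> ((1 + E) / 2) ^ m"
        using c0 by (intro power_mono) auto
      then have "w a * ((1 + (1 - 2*ppi) ^ a) / 2) ^ m \<le> w a * ((1 + E) / 2) ^ m"
        using w0 by (intro mult_left_mono) auto
      then show ?thesis using False by simp
    qed
  qed
  also have "\<dots> = ((1 + E) / 2) ^ m * (\<Sum>a\<le>k. w a) + (\<Sum>a\<le>k. w a * (if 2 * real a < real k * p then 1 else 0))"
    by (simp add: sum.distrib sum_distrib_right mult_ac)
  also have "(\<Sum>a\<le>k. w a) = 1"
    using binom_sum_geom[of k p 1] unfolding w_def by simp
  also have "(\<Sum>a\<le>k. w a * (if 2 * real a < real k * p then 1 else 0)) \<le> exp (- real k * KL (p/2) p)"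
    unfolding w_def by (rule chernoff[OF p])
  finally have A: "(\<Sum>a\<le>k. w a * ((1 + (1 - 2*ppi) ^ a) / 2) ^ m)
     \<le> ((1 + E) / 2) ^ m + exp (- real k * KL (p/2) p)" by simp
  define Z where "Z = exp (- (real k / real m) * KL (p / 2) p)"
  have Zm: "Z ^ m = exp (- real k * KL (p/2) p)"
    unfolding Z_def using m by (simp add: exp_of_nat_mult[symmetric])
  obtain m' where m': "m = Suc m'" using m by (cases m) auto
  have "((1 + E) / 2) ^ m + exp (- real k * KL (p/2) p) = (1/2) ^ m * ((1 + E) ^ m + (2 * Z) ^ m)"
    by (simp add: Zm power_mult_distrib power_divide field_simps)
  also have "\<dots> \<le> (1/2) ^ m * (1 + E + 2 * Z) ^ m"
    unfolding m' using superadd[of "1 + E" "2 * Z" m'] unfolding E_def Z_def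
    by (intro mult_left_mono) (auto simp: add.assoc)
  also have "(1/2 :: real) ^ m = 2 powr (- real m)"
    by (simp add: powr_minus powr_realpow power_one_over inverse_eq_divide)
  finally show ?thesis using A unfolding w_def E_def Z_def by linarith
qed

lemma kset_bound:
  fixes ppi :: real
  assumes pi: "0 < ppi" "ppi < 1/2" and c: "(1 - 2 * ppi) ^ K \<ge> 1/2"
  shows "2 * ppi * real K \<le> 1"
proof -
  have h: "(1 - 2 * ppi) ^ K * (1 + 2 * ppi * real K) \<le> 1" by (rule pow_bern_bound[OF pi])
  have "(1/2) * (1 + 2 * ppi * real K) \<le> (1 - 2 * ppi) ^ K * (1 + 2 * ppi * real K)"
    using c pi by (intro mult_right_mono) auto
  with h show ?thesis by (simp add: field_simps)
qed

lemma kstar_facts: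
  fixes ppi :: real
  assumes pi: "0 < ppi" "ppi < 1/2" and k: "1 \<le> k" "k \<le> kstar m ppi"
  shows "(1 - 2 * ppi) ^ k \<ge> 1/2 \<and> (1 - ppi / 2) ^ m \<ge> 1/2"
proof -
  define A where "A = {k::nat. (1 - 2 * ppi) ^ k \<ge> 1/2 \<and> (1 - ppi * real k / 2) ^ m \<ge> 1/2}"
  define B where "B = nat \<lceil>1 / (2 * ppi)\<rceil>"
  have "K \<le> B" if "K \<in> A" for K
  proof -
    have "2 * ppi * real K \<le> 1" using that kset_bound[OF pi] unfolding A_def by auto
    then have "real K \<le> 1 / (2 * ppi)" using pi by (simp add: field_simps)
    also have "\<dots> \<le> real B" unfolding B_def by (rule real_nat_ceiling_ge)
    finally show ?thesis by simp
  qed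
  then have fin: "finite A" unfolding finite_nat_set_iff_bounded_le by blast
  have "0 \<in> A" unfolding A_def by simp
  then have KA: "kstar m ppi \<in> A" unfolding kstar_def A_def[symmetric] using fin by (intro Max_in) auto
  define K where "K = kstar m ppi"
  have cK: "(1 - 2 * ppi) ^ K \<ge> 1/2" and mK: "(1 - ppi * real K / 2) ^ m \<ge> 1/2"
    using KA unfolding A_def K_def by auto
  have "(1 - 2 * ppi) ^ K \<le> (1 - 2 * ppi) ^ k"
    using pi k unfolding K_def by (intro power_decreasing) auto
  then have 1: "(1 - 2 * ppi) ^ k \<ge> 1/2" using cK by linarith
  have "2 * ppi * real K \<le> 1" using kset_bound[OF pi cK] .
  have Kge: "real K \<ge> 1" using k unfolding K_def by simp
  have "(1 - ppi * real K / 2) ^ m \<le> (1 - ppi / 2) ^ m"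
  proof (rule power_mono)
    show "0 \<le> 1 - ppi * real K / 2" using \<open>2 * ppi * real K \<le> 1\<close> pi by simp
    have "ppi * 1 \<le> ppi * real K" using Kge pi by (intro mult_left_mono) auto
    then show "1 - ppi * real K / 2 \<le> 1 - ppi / 2" by simp
  qed
  with mK 1 show ?thesis by linarith
qed

theorem lemma5:
  fixes m n k :: nat and p ppi :: real and x :: "nat \<Rightarrow> bool"
  assumes "0 < p" "p < 1" "0 < ppi" "ppi < 1/2"
    and "1 \<le> k" "k \<le> n"
    and "card {j. j < n \<and> x j} = k"
  shows "measure_pmf.prob (mat_pmf m n p ppi) {R. mat_vec_zero m n R x}
           \<le> 2 powr (- real m) *
             (1 + exp (- real k * p * ppi)
                + 2 * exp (- (real k / real m) * KL (p / 2) p)) ^ m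
         \<and> (k \<le> kstar m ppi \<longrightarrow>
         measure_pmf.prob (mat_pmf m n p ppi) {R. mat_vec_zero m n R x}
           \<le> exp (- real k * real m * p * ppi / 4))"
proof -
  have P: "measure_pmf.prob (mat_pmf m n p ppi) {R. mat_vec_zero m n R x} =
    (\<Sum>a\<le>k. real (k choose a) * p ^ a * (1 - p) ^ (k - a) * ((1 + (1 - 2*ppi) ^ a) / 2) ^ m)"
    using prob_formula[of p ppi n x k m] binom_formula[of m p "1 - 2 * ppi" k] assms by simp
  have first: "measure_pmf.prob (mat_pmf m n p ppi) {R. mat_vec_zero m n R x}
           \<le> 2 powr (- real m) *
             (1 + exp (- real k * p * ppi)
                + 2 * exp (- (real k / real m) * KL (p / 2) p)) ^ m"
  proof (cases "m = 0")
    case True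
    then show ?thesis by (simp add: measure_pmf.prob_le_1)
  next
    case False
    then show ?thesis unfolding P using assms by (intro bound1) auto
  qed
  have second: "measure_pmf.prob (mat_pmf m n p ppi) {R. mat_vec_zero m n R x}
           \<le> exp (- real k * real m * p * ppi / 4)" if "k \<le> kstar m ppi"
    using kstar_facts[of ppi k m] that assms unfolding P by (intro bound2) auto
  show ?thesis using first second by blast
qed

end
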